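(* Let $n\ge 4$ be even, $k=n/2$, and let $G=(V,E)$ be a graph with vertex set $V=\{1,\dots,n\}$, with graph state $|G\rangle$ and stabilizer operators $g_1,\dots,g_n$. Let $T>0$ be an arbitrary (unknown) temperature, $\beta=1/(k_BT)$, and let $\rho_T$ be the $n$-qubit thermal graph state at temperature $T$. Let $0<\epsilon,\delta<1$ and $N=\lceil (2/\epsilon^2)\log(2/\delta)\rceil$. Suppose the observable $S_{1^k0^k}=g_1g_2\cdots g_k$ is measured on each of $N$ independent copies of $\rho_T$, producing outcomes $o_1,\dots,o_N\in\{+1,-1\}$, and set $F_{\rm est}=\frac{1}{N}\sum_{i=1}^N o_i$. Then, with probability at least $1-\delta$, $$\left|\langle G|\rho_T|G\rangle-F_{\rm est}\right|\le \frac{n e^{-4\beta}}{2(1+e^{-2\beta})^n}+\epsilon\le \frac{2}{n}+\epsilon .$$ Moreover, in the limit $N\to\infty$, the inequality $\langle G|\rho_T|G\rangle\ge F_{\rm est}$ holds with probability one.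
   Context: For a graph $G=(V,E)$ on $n$ vertices, the graph state is $|G\rangle=\left(\prod_{(i,j)\in E}CZ_{i,j}\right)|+\rangle^{\otimes n}$, where $|+\rangle=(|0\rangle+|1\rangle)/\sqrt2$ and $CZ_{i,j}$ is the controlled-$Z$ gate on qubits $i,j$. Its stabilizer operators are $g_i=X_i\prod_{j:(i,j)\in E}Z_j$ for $1\le i\le n$, where $X_i,Z_j$ are Pauli operators on the indicated qubits. For $\ell=\ell_1\cdots\ell_n\in\{0,1\}^n$ let $S_\ell=\prod_{i=1}^n g_i^{\ell_i}$; $1^k0^k$ denotes the string of $k$ ones followed by $k$ zeros. Measuring $S_\ell$ on a state $\rho$ means performing the two-outcome projective measurement onto its $\pm1$ eigenspaces, so the outcome has expectation ${\rm Tr}[\rho S_\ell]$. With $\mathcal H=-\sum_{i=1}^n g_i$, the thermal graph state at temperature $T>0$ is $\rho_T=e^{-\beta\mathcal H}/{\rm Tr}[e^{-\beta\mathcal H}]$ with $\beta=1/(k_BT)$, $k_B$ the Boltzmann constant. $\log$ denotes the natural logarithm and $\lceil\cdot\rceil$ the ceiling function. *)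

theory Defs
  imports "Jordan_Normal_Form.Matrix" "HOL-Probability.Probability"
begin

text \<open>n-qubit Hilbert space: basis vectors indexed by b < 2^n; qubit i (1 \<le> i \<le> n)
  corresponds to the i-th tensor factor, i.e. bit (n - i) of b (qubit 1 most significant).\<close>

definition qbit :: "nat \<Rightarrow> nat \<Rightarrow> nat \<Rightarrow> nat" where
  "qbit n i b = (b div 2 ^ (n - i)) mod 2"

definition pauliX :: "nat \<Rightarrow> nat \<Rightarrow> complex Matrix.mat" where
  "pauliX n i = Matrix.mat (2^n) (2^n) (\<lambda>(a, b).
     if qbit n i a \<noteq> qbit n i b \<and> (\<forall>q\<in>{1..n}. q \<noteq> i \<longrightarrow> qbit n q a = qbit n q b)
     then 1 else 0)"

definition pauliZ :: "nat \<Rightarrow> nat \<Rightarrow> complex Matrix.mat" where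
  "pauliZ n i = Matrix.mat (2^n) (2^n) (\<lambda>(a, b). if a = b then (-1) ^ qbit n i a else 0)"

definition CZ :: "nat \<Rightarrow> nat \<Rightarrow> nat \<Rightarrow> complex Matrix.mat" where
  "CZ n i j = Matrix.mat (2^n) (2^n) (\<lambda>(a, b). if a = b then (-1) ^ (qbit n i a * qbit n j a) else 0)"

definition plus_state :: "nat \<Rightarrow> complex Matrix.vec" where
  "plus_state n = Matrix.vec (2^n) (\<lambda>_. complex_of_real (1 / sqrt (2 ^ n)))"

definition mprod_list :: "nat \<Rightarrow> complex Matrix.mat list \<Rightarrow> complex Matrix.mat" where
  "mprod_list d As = foldr (*) As (1\<^sub>m d)"

definition simple_graph :: "nat \<Rightarrow> nat set set \<Rightarrow> bool" where
  "simple_graph n E \<longleftrightarrow> (\<forall>e\<in>E. \<exists>i j. e = {i, j} \<and> i \<noteq> j \<and> i \<in> {1..n} \<and> j \<in> {1..n})"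

definition edge_list :: "nat \<Rightarrow> nat set set \<Rightarrow> (nat \<times> nat) list" where
  "edge_list n E = [(i, j). i \<leftarrow> [1..<n+1], j \<leftarrow> [i+1..<n+1], {i, j} \<in> E]"

definition graph_state :: "nat \<Rightarrow> nat set set \<Rightarrow> complex Matrix.vec" where
  "graph_state n E = mprod_list (2^n) (map (\<lambda>(i, j). CZ n i j) (edge_list n E)) *\<^sub>v plus_state n"

definition stab :: "nat \<Rightarrow> nat set set \<Rightarrow> nat \<Rightarrow> complex Matrix.mat" where
  "stab n E i = pauliX n i * mprod_list (2^n) (map (pauliZ n) (filter (\<lambda>j. {i, j} \<in> E) [1..<n+1]))"

text \<open>S_l = prod_i g_i^{l_i}, with l given as a function {1..n} -> {0,1}.\<close>
definition S_op :: "nat \<Rightarrow> nat set set \<Rightarrow> (nat \<Rightarrow> nat) \<Rightarrow> complex Matrix.mat" where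
  "S_op n E l = mprod_list (2^n) (map (\<lambda>i. stab n E i ^\<^sub>m l i) [1..<n+1])"

definition ones_zeros :: "nat \<Rightarrow> nat \<Rightarrow> nat" where
  "ones_zeros k i = (if i \<le> k then 1 else 0)"

definition hamiltonian :: "nat \<Rightarrow> nat set set \<Rightarrow> complex Matrix.mat" where
  "hamiltonian n E = - foldr (+) (map (stab n E) [1..<n+1]) (0\<^sub>m (2^n) (2^n))"

definition mtrace :: "complex Matrix.mat \<Rightarrow> complex" where
  "mtrace A = (\<Sum>i<dim_row A. A $$ (i, i))"

definition mat_exp :: "complex Matrix.mat \<Rightarrow> complex Matrix.mat" where
  "mat_exp A = Matrix.mat (dim_row A) (dim_col A)
     (\<lambda>(i, j). \<Sum>k. (A ^\<^sub>m k) $$ (i, j) / of_nat (fact k))"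

definition thermal_state :: "nat \<Rightarrow> nat set set \<Rightarrow> real \<Rightarrow> complex Matrix.mat" where
  "thermal_state n E \<beta> =
     (let M = mat_exp (complex_of_real (- \<beta>) \<cdot>\<^sub>m hamiltonian n E) in (1 / mtrace M) \<cdot>\<^sub>m M)"

definition expval :: "complex Matrix.vec \<Rightarrow> complex Matrix.mat \<Rightarrow> complex" where
  "expval \<psi> \<rho> = (\<Sum>a<dim_vec \<psi>. \<Sum>b<dim_vec \<psi>. cnj (\<psi> $ a) * \<rho> $$ (a, b) * \<psi> $ b)"

text \<open>Born probability of outcome a \<in> {+1,-1} when measuring the involutive Hermitian
  observable S (S^2 = I) on rho; (I + a S)/2 is the projector onto its a-eigenspace.\<close>
definition outcome_prob :: "complex Matrix.mat \<Rightarrow> complex Matrix.mat \<Rightarrow> real \<Rightarrow> real" where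
  "outcome_prob \<rho> S a =
     Re (mtrace (\<rho> * ((1/2 :: complex) \<cdot>\<^sub>m (1\<^sub>m (dim_row S) + complex_of_real a \<cdot>\<^sub>m S))))"

definition F_est :: "(nat \<Rightarrow> 'a \<Rightarrow> real) \<Rightarrow> nat \<Rightarrow> 'a \<Rightarrow> real" where
  "F_est out N \<omega> = (\<Sum>i<N. out i \<omega>) / real N"

end

theory Submission imports Defs begin

lemma sum_double: "(\<Sum>a<2*(m::nat). g a) = (\<Sum>r<m. g (2*r) + g (2*r+1))"
  by (induction m) (auto simp: algebra_simps)

lemma qbit_low: "1 \<le> i \<Longrightarrow> i \<le> n \<Longrightarrow> l < 2 \<Longrightarrow> qbit (Suc n) i (2*r+l) = qbit n i r"
proof -
  assume "1 \<le> i" "i \<le> n" "l < 2"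
  hence "Suc n - i = Suc (n - i)" by auto
  hence "(2*r+l) div 2^(Suc n - i) = ((2*r+l) div 2) div 2^(n-i)"
    by (simp add: div_mult2_eq)
  also have "(2*r+l) div 2 = r" using \<open>l<2\<close> by auto
  finally show ?thesis by (simp add: qbit_def)
qed

lemma qbit_top: "l < 2 \<Longrightarrow> qbit (Suc n) (Suc n) (2*r+l) = l"
  by (simp add: qbit_def)

lemma qbit_lt2: "qbit n i a < 2" by (simp add: qbit_def)

lemma PS: "(\<Sum>a<2^n. \<Prod>i\<in>{1..n}. f i (qbit n i a)) = (\<Prod>i\<in>{1..n}. (f i 0 + f i 1 :: 'b::comm_semiring_1))"
proof (induction n arbitrary: f)
  case 0
  then show ?case by simp
next
  case (Suc n)
  have e: "(\<Prod>i\<in>{1..Suc n}. f i (qbit (Suc n) i (2*r+l))) = f (Suc n) l * (\<Prod>i\<in>{1..n}. f i (qbit n i r))"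
    if "l < 2" for r l
  proof -
    have "(\<Prod>i\<in>{1..Suc n}. f i (qbit (Suc n) i (2*r+l))) = (\<Prod>i\<in>{1..n}. f i (qbit (Suc n) i (2*r+l))) * f (Suc n) (qbit (Suc n) (Suc n) (2*r+l))"
      by (simp add: prod.cl_ivl_Suc)
    also have "(\<Prod>i\<in>{1..n}. f i (qbit (Suc n) i (2*r+l))) = (\<Prod>i\<in>{1..n}. f i (qbit n i r))"
      by (rule prod.cong) (use that qbit_low in auto)
    finally show ?thesis using qbit_top[OF that] by (simp add: mult.commute)
  qed
  have "(\<Sum>a<2^Suc n. \<Prod>i\<in>{1..Suc n}. f i (qbit (Suc n) i a))
     = (\<Sum>r<2^n. (\<Prod>i\<in>{1..Suc n}. f i (qbit (Suc n) i (2*r+0))) + (\<Prod>i\<in>{1..Suc n}. f i (qbit (Suc n) i (2*r+1))))"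
    using sum_double[of "\<lambda>a. \<Prod>i\<in>{1..Suc n}. f i (qbit (Suc n) i a)" "2^n"] by simp
  also have "\<dots> = (\<Sum>r<2^n. (f (Suc n) 0 + f (Suc n) 1) * (\<Prod>i\<in>{1..n}. f i (qbit n i r)))"
    by (rule sum.cong) (simp_all only: e, auto simp: algebra_simps)
  also have "\<dots> = (f (Suc n) 0 + f (Suc n) 1) * (\<Prod>i\<in>{1..n}. (f i 0 + f i 1))"
    by (simp only: sum_distrib_left[symmetric] Suc.IH)
  finally show ?case by (simp add: prod.cl_ivl_Suc mult.commute)
qed

lemma qbit_div2: "1 \<le> i \<Longrightarrow> i \<le> n \<Longrightarrow> qbit (Suc n) i a = qbit n i (a div 2)"
proof -
  assume a: "1 \<le> i" "i \<le> n"
  have "a = 2 * (a div 2) + a mod 2" by simp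
  hence "qbit (Suc n) i a = qbit (Suc n) i (2 * (a div 2) + a mod 2)" by simp
  also have "\<dots> = qbit n i (a div 2)" by (rule qbit_low) (use a in auto)
  finally show ?thesis .
qed

lemma qbit_unique: "a < 2^n \<Longrightarrow> b < 2^n \<Longrightarrow> (\<forall>i\<in>{1..n}. qbit n i a = qbit n i b) \<Longrightarrow> a = b"
proof (induction n arbitrary: a b)
  case 0
  then show ?case by simp
next
  case (Suc n)
  have "a mod 2 = b mod 2" using Suc.prems(3)[rule_format, of "Suc n"] by (simp add: qbit_def)
  moreover have "a div 2 = b div 2"
  proof (rule Suc.IH)
    show "a div 2 < 2^n" "b div 2 < 2^n" using Suc.prems by auto
    show "\<forall>i\<in>{1..n}. qbit n i (a div 2) = qbit n i (b div 2)"
    proof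
      fix i assume i: "i \<in> {1..n}"
      hence "qbit (Suc n) i a = qbit (Suc n) i b" using Suc.prems(3) by auto
      thus "qbit n i (a div 2) = qbit n i (b div 2)" using i by (simp add: qbit_div2)
    qed
  qed
  ultimately show ?case by (metis div_mult_mod_eq)
qed

lemma mult_entry: "A \<in> carrier_mat d d \<Longrightarrow> B \<in> carrier_mat d d \<Longrightarrow> i < d \<Longrightarrow> j < d \<Longrightarrow>
  (A * B) $$ (i,j) = (\<Sum>k<d. A $$ (i,k) * B $$ (k,j))"
  by (auto simp: scalar_prod_def lessThan_atLeast0 intro!: sum.cong)

definition dg :: "nat \<Rightarrow> (nat \<Rightarrow> complex) \<Rightarrow> complex Matrix.mat" where
  "dg d f = Matrix.mat d d (\<lambda>(a,b). if a = b then f a else 0)"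

lemma dg_carrier[simp]: "dg d f \<in> carrier_mat d d" and dg_dim[simp]: "dim_row (dg d f) = d" "dim_col (dg d f) = d"
  by (auto simp: dg_def)

lemma dg_index[simp]: "a < d \<Longrightarrow> b < d \<Longrightarrow> dg d f $$ (a,b) = (if a = b then f a else 0)"
  by (simp add: dg_def)

lemma mult_dg_entry: "A \<in> carrier_mat d d \<Longrightarrow> i < d \<Longrightarrow> j < d \<Longrightarrow> (A * dg d f) $$ (i,j) = A $$ (i,j) * f j"
  apply (subst mult_entry[where d=d], auto)
  apply (simp add: if_distrib[of "\<lambda>x. _ * x"] cong: if_cong)
  done

lemma dg_mult_entry: "A \<in> carrier_mat d d \<Longrightarrow> i < d \<Longrightarrow> j < d \<Longrightarrow> (dg d f * A) $$ (i,j) = f i * A $$ (i,j)"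
  apply (subst mult_entry[where d=d], auto)
  apply (simp add: if_distrib[of "\<lambda>x. x * _"] cong: if_cong)
  done

lemma dg_mult: "dg d f * dg d g = dg d (\<lambda>a. f a * g a)"
  by (rule eq_matI) (auto simp del: index_mult_mat(1) simp: mult_dg_entry)

lemma dg_one: "dg d (\<lambda>_. 1) = 1\<^sub>m d"
  by (rule eq_matI) auto

lemma mprod_dg: "mprod_list d (map (\<lambda>x. dg d (h x)) xs) = dg d (\<lambda>a. prod_list (map (\<lambda>x. h x a) xs))"
  by (induction xs) (auto simp: mprod_list_def dg_one dg_mult)

lemma pauliZ_dg: "pauliZ n i = dg (2^n) (\<lambda>a. (-1)^qbit n i a)"
  unfolding pauliZ_def dg_def by simp

lemma CZ_dg: "CZ n i j = dg (2^n) (\<lambda>a. (-1)^(qbit n i a * qbit n j a))"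
  unfolding CZ_def dg_def by simp

lemma char_sum: "(\<Sum>s<2^n. (-1::complex)^(\<Sum>j\<in>{1..n}. c j * qbit n j s)) = (if \<forall>j\<in>{1..n}. even (c j) then 2^n else 0)"
proof -
  have "(\<Sum>s<2^n. (-1::complex)^(\<Sum>j\<in>{1..n}. c j * qbit n j s)) = (\<Sum>s<2^n. \<Prod>j\<in>{1..n}. (\<lambda>j x. (-1::complex)^(c j * x)) j (qbit n j s))"
    by (simp add: power_sum)
  also have "\<dots> = (\<Prod>j\<in>{1..n}. (1 + (-1)^(c j)))" by (subst PS) simp
  also have "\<dots> = (\<Prod>j\<in>{1..n}. (if even (c j) then 2 else 0))"
    by (rule prod.cong) auto
  also have "\<dots> = (if \<forall>j\<in>{1..n}. even (c j) then 2^n else 0)"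
    by auto
  finally show ?thesis .
qed

definition Hd :: "nat \<Rightarrow> complex Matrix.mat" where
  "Hd n = Matrix.mat (2^n) (2^n) (\<lambda>(a,b). (-1)^(\<Sum>i\<in>{1..n}. qbit n i a * qbit n i b) / complex_of_real (sqrt (2^n)))"

lemma Hd_carrier[simp]: "Hd n \<in> carrier_mat (2^n) (2^n)" and Hd_dim[simp]: "dim_row (Hd n) = 2^n" "dim_col (Hd n) = 2^n"
  by (auto simp: Hd_def)

lemma Hd_index: "a < 2^n \<Longrightarrow> b < 2^n \<Longrightarrow> Hd n $$ (a,b) = (-1)^(\<Sum>i\<in>{1..n}. qbit n i a * qbit n i b) / complex_of_real (sqrt (2^n))"
  by (simp add: Hd_def)

lemma sqrt2n: "complex_of_real (sqrt (2^n)) * complex_of_real (sqrt (2^n)) = 2^n"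
  by (metis of_real_mult of_real_numeral of_real_power real_sqrt_pow2 power2_eq_square zero_le_numeral zero_le_power)

lemma even_bits: "x < 2 \<Longrightarrow> y < 2 \<Longrightarrow> even (x + y) \<longleftrightarrow> x = (y::nat)"
  by (cases x; cases y) auto

lemma Hd_Hd: "Hd n * Hd n = 1\<^sub>m (2^n)"
proof (rule eq_matI)
  fix a b assume ab: "a < dim_row (1\<^sub>m (2^n))" "b < dim_col (1\<^sub>m (2^n) :: complex Matrix.mat)"
  hence ab: "a < 2^n" "b < 2^n" by auto
  have "(Hd n * Hd n) $$ (a,b) = (\<Sum>s<2^n. (-1::complex)^(\<Sum>j\<in>{1..n}. (qbit n j a + qbit n j b) * qbit n j s)) / 2^n"
  proof -
    have "(Hd n * Hd n) $$ (a,b) = (\<Sum>s<2^n. Hd n $$ (a,s) * Hd n $$ (s,b))"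
      by (rule mult_entry) (use ab in auto)
    also have "\<dots> = (\<Sum>s<2^n. (-1::complex)^(\<Sum>j\<in>{1..n}. (qbit n j a + qbit n j b) * qbit n j s) / 2^n)"
    proof (rule sum.cong)
      fix s assume "s \<in> {..<(2::nat)^n}"
      hence s: "s < 2^n" by auto
      have "(\<Sum>j\<in>{1..n}. (qbit n j a + qbit n j b) * qbit n j s) = (\<Sum>j\<in>{1..n}. qbit n j a * qbit n j s) + (\<Sum>j\<in>{1..n}. qbit n j s * qbit n j b)"
        by (simp add: sum.distrib[symmetric] algebra_simps)
      thus "Hd n $$ (a,s) * Hd n $$ (s,b) = (-1::complex)^(\<Sum>j\<in>{1..n}. (qbit n j a + qbit n j b) * qbit n j s) / 2^n"
        using ab s by (simp add: Hd_index power_add sqrt2n)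
    qed simp
    finally show ?thesis by (simp add: sum_divide_distrib)
  qed
  also have "\<dots> = (if a = b then 1 else 0)"
  proof -
    have "(\<forall>j\<in>{1..n}. even (qbit n j a + qbit n j b)) \<longleftrightarrow> a = b"
    proof
      assume "\<forall>j\<in>{1..n}. even (qbit n j a + qbit n j b)"
      hence "\<forall>j\<in>{1..n}. qbit n j a = qbit n j b" using qbit_lt2[of n _ a] qbit_lt2[of n _ b]
        using even_bits by blast
      thus "a = b" using qbit_unique ab by blast
    qed auto
    thus ?thesis by (simp only: char_sum) simp
  qed
  finally show "(Hd n * Hd n) $$ (a,b) = 1\<^sub>m (2^n) $$ (a,b)" using ab by simp
qed auto

lemma HZH: assumes i: "i \<in> {1..n}" shows "Hd n * pauliZ n i * Hd n = pauliX n i"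
proof (rule eq_matI)
  fix a b assume ab: "a < dim_row (pauliX n i)" "b < dim_col (pauliX n i)"
  hence ab: "a < 2^n" "b < 2^n" by (auto simp: pauliX_def)
  define c where "c j = qbit n j a + qbit n j b + (if j = i then 1 else 0)" for j
  have "(Hd n * pauliZ n i * Hd n) $$ (a,b) = (\<Sum>s<2^n. (Hd n * pauliZ n i) $$ (a,s) * Hd n $$ (s,b))"
    by (rule mult_entry) (use ab in \<open>auto simp: pauliZ_dg\<close>)
  also have "\<dots> = (\<Sum>s<2^n. (-1::complex)^(\<Sum>j\<in>{1..n}. c j * qbit n j s) / 2^n)"
  proof (rule sum.cong)
    fix s assume "s \<in> {..<(2::nat)^n}"
    hence s: "s < 2^n" by auto
    have e: "(\<Sum>j\<in>{1..n}. (if j = i then 1 else 0) * qbit n j s) = qbit n i s"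
      using i by (simp add: if_distrib[of "\<lambda>x. x * _"] cong: if_cong)
    have "(\<Sum>j\<in>{1..n}. c j * qbit n j s) = (\<Sum>j\<in>{1..n}. qbit n j a * qbit n j s) + qbit n i s + (\<Sum>j\<in>{1..n}. qbit n j s * qbit n j b)"
      unfolding c_def e[symmetric] by (simp add: sum.distrib[symmetric] algebra_simps)
    moreover have "(Hd n * pauliZ n i) $$ (a,s) = Hd n $$ (a,s) * (-1)^qbit n i s"
      unfolding pauliZ_dg by (rule mult_dg_entry) (use ab s in auto)
    ultimately show "(Hd n * pauliZ n i) $$ (a,s) * Hd n $$ (s,b) = (-1::complex)^(\<Sum>j\<in>{1..n}. c j * qbit n j s) / 2^n"
      using ab s by (simp add: Hd_index power_add sqrt2n)
  qed simp
  also have "\<dots> = (if \<forall>j\<in>{1..n}. even (c j) then 1 else 0)"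
    by (simp only: sum_divide_distrib[symmetric] char_sum) simp
  also have "(\<forall>j\<in>{1..n}. even (c j)) \<longleftrightarrow> qbit n i a \<noteq> qbit n i b \<and> (\<forall>q\<in>{1..n}. q \<noteq> i \<longrightarrow> qbit n q a = qbit n q b)"
  proof -
    have "even (c j) \<longleftrightarrow> (if j = i then qbit n j a \<noteq> qbit n j b else qbit n j a = qbit n j b)" for j
      using even_bits[OF qbit_lt2 qbit_lt2, of n j a n j b] qbit_lt2[of n j a] qbit_lt2[of n j b]
      unfolding c_def by auto
    thus ?thesis using i by auto
  qed
  finally show "(Hd n * pauliZ n i * Hd n) $$ (a,b) = pauliX n i $$ (a,b)"
    using ab by (simp add: pauliX_def)
qed (auto simp: pauliX_def)

lemma prod_list_upt: "prod_list (map f [a..<b]) = prod f {a..<b}"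
  by (simp add: prod.distinct_set_conv_list[symmetric])

lemma prod_list_concat: "prod_list (concat xss) = prod_list (map prod_list xss)"
  by (induct xss) auto

lemma prod_list_filter: "prod_list (map f (filter P xs)) = prod_list (map (\<lambda>x. if P x then f x else 1) xs)"
  by (induct xs) auto

lemma prod_list_mult: "prod_list (map f xs) * prod_list (map g xs) = prod_list (map (\<lambda>x. f x * g x :: 'b::comm_monoid_mult) xs)"
proof (induct xs)
  case (Cons a xs)
  then show ?case by (simp flip: Cons.hyps add: ac_simps)
qed simp

lemma prod_edge_list: "prod_list (map h (edge_list n E)) =
   (\<Prod>p\<in>{1..<n+1}. \<Prod>q\<in>{p+1..<n+1}. (if {p,q} \<in> E then h (p,q) else 1))"
  unfolding edge_list_def
  by (simp add: map_concat prod_list_concat comp_def prod_list_upt[symmetric] if_distrib[of "map _"] if_distrib[of prod_list] cong: if_cong)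

lemma sg_no_loop: "simple_graph n E \<Longrightarrow> {i,i} \<notin> E"
  unfolding simple_graph_def by (metis doubleton_eq_iff insert_absorb2)

lemma edge_flip:
  fixes h :: "nat \<times> nat \<Rightarrow> 'b::comm_monoid_mult"
  assumes sg: "simple_graph n E" and i: "i \<in> {1..n}"
    and hv: "\<And>p q. p \<in> {1..n} \<Longrightarrow> q \<in> {1..n} \<Longrightarrow> p < q \<Longrightarrow> {p,q} \<in> E \<Longrightarrow> h (p,q) = (if p = i then u q else if q = i then u p else 1)"
  shows "(\<Prod>p\<in>{1..<n+1}. \<Prod>q\<in>{p+1..<n+1}. (if {p,q} \<in> E then h (p,q) else 1)) = (\<Prod>j\<in>{1..<n+1}. if {i,j} \<in> E then u j else 1)"
proof -
  define K1 where "K1 p q = (if {p,q} \<in> E \<and> p = i then u q else 1)" for p q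
  define K2 where "K2 p q = (if q = i then (if {p,i} \<in> E then u p else 1) else 1)" for p q
  define X where "X = (\<Prod>q\<in>{i+1..<n+1}. if {i,q} \<in> E then u q else 1)"
  have "(\<Prod>p\<in>{1..<n+1}. \<Prod>q\<in>{p+1..<n+1}. (if {p,q} \<in> E then h (p,q) else 1)) =
        (\<Prod>p\<in>{1..<n+1}. \<Prod>q\<in>{p+1..<n+1}. K1 p q * K2 p q)"
  proof (intro prod.cong refl)
    fix p q assume p: "p \<in> {1..<n+1}" and q: "q \<in> {p+1..<n+1}"
    show "(if {p,q} \<in> E then h (p,q) else 1) = K1 p q * K2 p q"
    proof (cases "{p,q} \<in> E")
      case True
      then show ?thesis using hv[of p q] p q by (auto simp: K1_def K2_def)
    next
      case False
      then show ?thesis using p q by (auto simp: K1_def K2_def)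
    qed
  qed
  also have "\<dots> = (\<Prod>p\<in>{1..<n+1}. \<Prod>q\<in>{p+1..<n+1}. K1 p q) * (\<Prod>p\<in>{1..<n+1}. \<Prod>q\<in>{p+1..<n+1}. K2 p q)"
    by (simp add: prod.distrib)
  also have "(\<Prod>p\<in>{1..<n+1}. \<Prod>q\<in>{p+1..<n+1}. K1 p q) = (\<Prod>p\<in>{1..<n+1}. if p = i then X else 1)"
    by (rule prod.cong) (auto simp: K1_def X_def)
  also have "\<dots> = X" using i by simp
  also have "(\<Prod>p\<in>{1..<n+1}. \<Prod>q\<in>{p+1..<n+1}. K2 p q) = (\<Prod>p\<in>{1..<n+1}. if i \<in> {p+1..<n+1} then (if {p,i} \<in> E then u p else 1) else 1)"
    by (rule prod.cong) (auto simp: K2_def)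
  also have "X = (\<Prod>j\<in>{1..<n+1}. if i < j then (if {i,j} \<in> E then u j else 1) else 1)"
  proof -
    have "{i+1..<n+1} = {j\<in>{1..<n+1}. i < j}" by auto
    thus ?thesis unfolding X_def by (simp only: prod.inter_filter[OF finite_atLeastLessThan])
  qed
  also have "(\<Prod>j\<in>{1..<n+1}. if i < j then (if {i,j} \<in> E then u j else 1) else 1) *
     (\<Prod>p\<in>{1..<n+1}. if i \<in> {p+1..<n+1} then (if {p,i} \<in> E then u p else 1) else 1)
     = (\<Prod>j\<in>{1..<n+1}. if {i,j} \<in> E then u j else 1)"
    unfolding prod.distrib[symmetric]
  proof (rule prod.cong)
    fix j assume j: "j \<in> {1..<n+1}"
    show "(if i < j then (if {i,j} \<in> E then u j else 1) else 1) *
      (if i \<in> {j+1..<n+1} then (if {j,i} \<in> E then u j else 1) else 1) = (if {i,j} \<in> E then u j else 1)"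
      using i j sg_no_loop[OF sg, of i] by (cases "i < j"; cases "j < i") (auto simp: insert_commute)
  qed simp
  finally show ?thesis .
qed

definition cph :: "nat \<Rightarrow> nat set set \<Rightarrow> nat \<Rightarrow> complex" where
  "cph n E a = prod_list (map (\<lambda>(i,j). (-1)^(qbit n i a * qbit n j a)) (edge_list n E))"

definition Cm :: "nat \<Rightarrow> nat set set \<Rightarrow> complex Matrix.mat" where
  "Cm n E = dg (2^n) (cph n E)"

lemma Cm_carrier[simp]: "Cm n E \<in> carrier_mat (2^n) (2^n)" and Cm_dim[simp]: "dim_row (Cm n E) = 2^n" "dim_col (Cm n E) = 2^n"
  by (auto simp add: Cm_def)

lemma CZ_prod: "mprod_list (2^n) (map (\<lambda>(i, j). CZ n i j) (edge_list n E)) = Cm n E"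
proof -
  have m: "map (\<lambda>(i, j). CZ n i j) (edge_list n E) = map (\<lambda>x. dg (2^n) ((\<lambda>(i,j) a. (-1)^(qbit n i a * qbit n j a)) x)) (edge_list n E)"
    by (auto simp: CZ_dg)
  show ?thesis unfolding m mprod_dg Cm_def cph_def by (simp add: case_prod_unfold)
qed

lemma sq_prod_list: "(\<And>x. x \<in> set xs \<Longrightarrow> f x * f x = 1) \<Longrightarrow> prod_list (map f xs) * prod_list (map f xs) = (1::complex)"
proof (induct xs)
  case (Cons a xs)
  have "prod_list (map f (a#xs)) * prod_list (map f (a#xs)) = (f a * f a) * (prod_list (map f xs) * prod_list (map f xs))"
    by (simp add: ac_simps)
  then show ?case using Cons by simp
qed simp

lemma cph_sq: "cph n E a * cph n E a = 1"
  unfolding cph_def by (rule sq_prod_list) (auto simp flip: power_add)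

lemma Cm_Cm: "Cm n E * Cm n E = 1\<^sub>m (2^n)"
  by (simp add: Cm_def dg_mult cph_sq dg_one)

lemma bits_sum1: "x < 2 \<Longrightarrow> y < 2 \<Longrightarrow> x \<noteq> y \<Longrightarrow> x + y = (1::nat)"
  by auto

lemma stab_Cm: assumes sg: "simple_graph n E" and i: "i \<in> {1..n}"
  shows "stab n E i = Cm n E * pauliX n i * Cm n E"
proof -
  define z where "z b = prod_list (map (\<lambda>j. (-1::complex)^qbit n j b) (filter (\<lambda>j. {i, j} \<in> E) [1..<n+1]))" for b
  have X: "pauliX n i \<in> carrier_mat (2^n) (2^n)" by (simp add: pauliX_def)
  have st: "stab n E i = pauliX n i * dg (2^n) z"
    unfolding stab_def pauliZ_dg z_def by (simp add: mprod_dg)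
  show ?thesis
  proof (rule eq_matI)
    fix a b assume ab: "a < dim_row (Cm n E * pauliX n i * Cm n E)" "b < dim_col (Cm n E * pauliX n i * Cm n E)"
    hence ab: "a < 2^n" "b < 2^n" by auto
    have r: "(Cm n E * pauliX n i * Cm n E) $$ (a,b) = cph n E a * pauliX n i $$ (a,b) * cph n E b"
    proof -
      have "(Cm n E * pauliX n i * Cm n E) $$ (a,b) = (Cm n E * pauliX n i) $$ (a,b) * cph n E b"
        unfolding Cm_def by (rule mult_dg_entry) (use ab X in auto)
      also have "(Cm n E * pauliX n i) $$ (a,b) = cph n E a * pauliX n i $$ (a,b)"
        unfolding Cm_def by (rule dg_mult_entry) (use ab X in auto)
      finally show ?thesis .
    qed
    have l: "stab n E i $$ (a,b) = pauliX n i $$ (a,b) * z b"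
      unfolding st by (rule mult_dg_entry) (use ab X in auto)
    show "stab n E i $$ (a,b) = (Cm n E * pauliX n i * Cm n E) $$ (a,b)"
    proof (cases "qbit n i a \<noteq> qbit n i b \<and> (\<forall>q\<in>{1..n}. q \<noteq> i \<longrightarrow> qbit n q a = qbit n q b)")
      case False
      then have "pauliX n i $$ (a,b) = 0" using ab by (simp add: pauliX_def)
      then show ?thesis unfolding r l by simp
    next
      case True
      define u where "u j = (-1::complex)^qbit n j b" for j
      have "cph n E a * cph n E b = prod_list (map (\<lambda>(p,q). (-1::complex)^(qbit n p a * qbit n q a) * (-1)^(qbit n p b * qbit n q b)) (edge_list n E))"
        unfolding cph_def by (simp add: prod_list_mult case_prod_unfold)
      also have "\<dots> = (\<Prod>j\<in>{1..<n+1}. if {i,j} \<in> E then u j else 1)"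
        unfolding prod_edge_list
      proof (rule edge_flip[OF sg i])
        fix p q assume p: "p \<in> {1..n}" and q: "q \<in> {1..n}" and pq: "p < q"
        have s1: "qbit n i a + qbit n i b = 1" using True by (intro bits_sum1 qbit_lt2) auto
        show "(case (p,q) of (p,q) \<Rightarrow> (-1::complex)^(qbit n p a * qbit n q a) * (-1)^(qbit n p b * qbit n q b)) = (if p = i then u q else if q = i then u p else 1)"
        proof -
          have "(-1::complex)^(qbit n p a * qbit n q a) * (-1)^(qbit n p b * qbit n q b) = (-1)^(qbit n p a * qbit n q a + qbit n p b * qbit n q b)"
            by (simp add: power_add)
          also have "\<dots> = (if p = i then u q else if q = i then u p else 1)"
          proof (cases "p = i")
            case True
            hence "qbit n p a * qbit n q a + qbit n p b * qbit n q b = (qbit n i a + qbit n i b) * qbit n q b"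
              using \<open>qbit n i a \<noteq> qbit n i b \<and> _\<close> q pq by (auto simp: algebra_simps)
            thus ?thesis using True s1 by (simp add: u_def)
          next
            case pi: False
            show ?thesis
            proof (cases "q = i")
              case True
              hence "qbit n p a * qbit n q a + qbit n p b * qbit n q b = (qbit n i a + qbit n i b) * qbit n p b"
                using \<open>qbit n i a \<noteq> qbit n i b \<and> _\<close> p pq by (auto simp: algebra_simps)
              thus ?thesis using True pi s1 by (simp add: u_def)
            next
              case False
              hence "qbit n p a * qbit n q a + qbit n p b * qbit n q b = 2 * (qbit n p b * qbit n q b)"
                using \<open>qbit n i a \<noteq> qbit n i b \<and> _\<close> p q pi by auto
              thus ?thesis using False pi by (simp add: power_mult)
            qed
          qed
          finally show ?thesis by simp
        qed
      qed
      also have "\<dots> = z b"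
        unfolding z_def prod_list_filter prod_list_upt u_def by simp
      finally have "z b = cph n E a * cph n E b" by simp
      then show ?thesis unfolding r l by simp
    qed
  qed (auto simp: st pauliX_def)
qed

lemma mult_carrier_sq[simp]: "A \<in> carrier_mat d d \<Longrightarrow> B \<in> carrier_mat d d \<Longrightarrow> A * B \<in> carrier_mat d d"
  by (rule mult_carrier_mat)

definition W :: "nat \<Rightarrow> nat set set \<Rightarrow> complex Matrix.mat" where "W n E = Cm n E * Hd n"
definition Wi :: "nat \<Rightarrow> nat set set \<Rightarrow> complex Matrix.mat" where "Wi n E = Hd n * Cm n E"

lemma W_carrier[simp]: "W n E \<in> carrier_mat (2^n) (2^n)" "Wi n E \<in> carrier_mat (2^n) (2^n)"
  and W_dim[simp]: "dim_row (W n E) = 2^n" "dim_col (W n E) = 2^n" "dim_row (Wi n E) = 2^n" "dim_col (Wi n E) = 2^n"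
  by (auto simp: W_def Wi_def)

lemma Wi_W: "Wi n E * W n E = 1\<^sub>m (2^n)"
proof -
  have "Wi n E * W n E = Hd n * (Cm n E * Cm n E) * Hd n"
    unfolding W_def Wi_def by (simp add: assoc_mult_mat[of _ "2^n" "2^n" _ "2^n" _ "2^n"])
  also have "\<dots> = 1\<^sub>m (2^n)" by (simp add: Cm_Cm Hd_Hd)
  finally show ?thesis .
qed

lemma W_Wi: "W n E * Wi n E = 1\<^sub>m (2^n)"
proof -
  have "W n E * Wi n E = Cm n E * (Hd n * Hd n) * Cm n E"
    unfolding W_def Wi_def by (simp add: assoc_mult_mat[of _ "2^n" "2^n" _ "2^n" _ "2^n"])
  also have "\<dots> = 1\<^sub>m (2^n)" by (simp add: Cm_Cm Hd_Hd)
  finally show ?thesis .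
qed

definition cj :: "nat \<Rightarrow> nat set set \<Rightarrow> (nat \<Rightarrow> complex) \<Rightarrow> complex Matrix.mat" where
  "cj n E f = W n E * dg (2^n) f * Wi n E"

lemma cj_carrier[simp]: "cj n E f \<in> carrier_mat (2^n) (2^n)"
  and cj_dim[simp]: "dim_row (cj n E f) = 2^n" "dim_col (cj n E f) = 2^n"
  by (auto simp: cj_def)

lemma stab_cj: assumes sg: "simple_graph n E" and i: "i \<in> {1..n}"
  shows "stab n E i = cj n E (\<lambda>a. (-1)^qbit n i a)"
proof -
  have Z: "pauliZ n i \<in> carrier_mat (2^n) (2^n)" by (simp add: pauliZ_dg)
  have "stab n E i = Cm n E * (Hd n * pauliZ n i * Hd n) * Cm n E"
    by (simp add: stab_Cm[OF sg i] HZH[OF i])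
  also have "\<dots> = W n E * pauliZ n i * Wi n E"
    unfolding W_def Wi_def using Z by (simp add: assoc_mult_mat[of _ "2^n" "2^n" _ "2^n" _ "2^n"])
  finally show ?thesis by (simp add: cj_def pauliZ_dg)
qed

lemma cj_mult: "cj n E f * cj n E g = cj n E (\<lambda>a. f a * g a)"
proof -
  have "cj n E f * cj n E g = W n E * dg (2^n) f * (Wi n E * W n E) * dg (2^n) g * Wi n E"
    unfolding cj_def by (simp add: assoc_mult_mat[of _ "2^n" "2^n" _ "2^n" _ "2^n"])
  also have "\<dots> = W n E * (dg (2^n) f * dg (2^n) g) * Wi n E"
    by (simp add: Wi_W assoc_mult_mat[of _ "2^n" "2^n" _ "2^n" _ "2^n"])
  finally show ?thesis by (simp add: dg_mult cj_def)
qed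

lemma cj_one: "cj n E (\<lambda>_. 1) = 1\<^sub>m (2^n)"
  unfolding cj_def dg_one by (simp add: W_Wi)

lemma cj_entry: "a < 2^n \<Longrightarrow> b < 2^n \<Longrightarrow> cj n E f $$ (a,b) = (\<Sum>c<2^n. W n E $$ (a,c) * f c * Wi n E $$ (c,b))"
proof -
  assume ab: "a < 2^n" "b < 2^n"
  have "cj n E f $$ (a,b) = (\<Sum>c<2^n. (W n E * dg (2^n) f) $$ (a,c) * Wi n E $$ (c,b))"
    unfolding cj_def by (rule mult_entry) (use ab in auto)
  also have "\<dots> = (\<Sum>c<2^n. W n E $$ (a,c) * f c * Wi n E $$ (c,b))"
  proof (rule sum.cong)
    fix c assume "c \<in> {..<(2::nat)^n}"
    then show "(W n E * dg (2^n) f) $$ (a,c) * Wi n E $$ (c,b) = W n E $$ (a,c) * f c * Wi n E $$ (c,b)"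
      using ab by (subst mult_dg_entry[where d="2^n"]) auto
  qed simp
  finally show ?thesis .
qed

lemma cj_add: "cj n E f + cj n E g = cj n E (\<lambda>a. f a + g a)"
  by (rule eq_matI) (auto simp: cj_entry sum.distrib[symmetric] algebra_simps)

lemma cj_smult: "c \<cdot>\<^sub>m cj n E f = cj n E (\<lambda>a. c * f a)"
  by (rule eq_matI) (auto simp: cj_entry sum_distrib_left algebra_simps)

lemma cj_uminus: "- cj n E f = cj n E (\<lambda>a. - f a)"
  by (rule eq_matI) (auto simp: cj_entry sum_negf[symmetric] algebra_simps)

lemma cj_zero: "0\<^sub>m (2^n) (2^n) = cj n E (\<lambda>_. 0)"
  by (rule eq_matI) (auto simp: cj_entry)

lemma cj_pow: "cj n E f ^\<^sub>m k = cj n E (\<lambda>a. f a ^ k)"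
  by (induction k) (auto simp: cj_one cj_mult mult.commute)

lemma cj_trace: "mtrace (cj n E f) = (\<Sum>c<2^n. f c)"
proof -
  have "mtrace (cj n E f) = (\<Sum>a<2^n. \<Sum>c<2^n. W n E $$ (a,c) * f c * Wi n E $$ (c,a))"
    unfolding mtrace_def by (simp add: cj_entry)
  also have "\<dots> = (\<Sum>c<2^n. f c * (\<Sum>a<2^n. Wi n E $$ (c,a) * W n E $$ (a,c)))"
    by (subst sum.swap) (simp add: sum_distrib_left algebra_simps)
  also have "\<dots> = (\<Sum>c<2^n. f c)"
  proof (rule sum.cong)
    fix c assume c: "c \<in> {..<(2::nat)^n}"
    have "(\<Sum>a<2^n. Wi n E $$ (c,a) * W n E $$ (a,c)) = (Wi n E * W n E) $$ (c,c)"
      by (rule mult_entry[symmetric]) (use c in auto)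
    thus "f c * (\<Sum>a<2^n. Wi n E $$ (c,a) * W n E $$ (a,c)) = f c" using c by (simp add: Wi_W)
  qed simp
  finally show ?thesis .
qed

lemma exp_sums_c: "(\<lambda>k. (x::complex)^k / of_nat (fact k)) sums exp x"
proof -
  have "(\<lambda>k. x^k /\<^sub>R fact k) = (\<lambda>k. (x::complex)^k / of_nat (fact k))"
    by (auto simp: scaleR_conv_of_real divide_inverse mult.commute of_real_inverse)
  thus ?thesis using exp_converges[of x] by simp
qed

lemma cj_exp: "mat_exp (cj n E f) = cj n E (\<lambda>a. exp (f a))"
proof (rule eq_matI)
  fix a b assume "a < dim_row (cj n E (\<lambda>a. exp (f a)))" "b < dim_col (cj n E (\<lambda>a. exp (f a)))"
  hence ab: "a < 2^n" "b < 2^n" by auto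
  have "(\<lambda>k. (cj n E f ^\<^sub>m k) $$ (a,b) / of_nat (fact k)) = (\<lambda>k. \<Sum>c<2^n. (W n E $$ (a,c) * Wi n E $$ (c,b)) * (f c ^ k / of_nat (fact k)))"
    using ab by (auto simp: cj_pow cj_entry sum_divide_distrib intro!: sum.cong)
  moreover have "(\<lambda>k. \<Sum>c<2^n. (W n E $$ (a,c) * Wi n E $$ (c,b)) * (f c ^ k / of_nat (fact k))) sums
       (\<Sum>c<2^n. (W n E $$ (a,c) * Wi n E $$ (c,b)) * exp (f c))"
    by (intro sums_sum sums_mult exp_sums_c)
  ultimately have "(\<Sum>k. (cj n E f ^\<^sub>m k) $$ (a,b) / of_nat (fact k)) = (\<Sum>c<2^n. W n E $$ (a,c) * exp (f c) * Wi n E $$ (c,b))"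
    by (simp add: sums_iff algebra_simps)
  thus "mat_exp (cj n E f) $$ (a,b) = cj n E (\<lambda>a. exp (f a)) $$ (a,b)"
    using ab by (simp add: mat_exp_def cj_entry)
qed (auto simp: mat_exp_def)

lemma foldr_cj: "foldr (+) (map (\<lambda>i. cj n E (h i)) xs) (0\<^sub>m (2^n) (2^n)) = cj n E (\<lambda>a. sum_list (map (\<lambda>i. h i a) xs))"
  by (induction xs) (auto simp: cj_zero[of n E] cj_add)

lemma mprod_cj: "mprod_list (2^n) (map (\<lambda>i. cj n E (h i)) xs) = cj n E (\<lambda>a. prod_list (map (\<lambda>i. h i a) xs))"
  by (induction xs) (auto simp: mprod_list_def cj_one cj_mult)

lemma upt_set: "{1..<n+1} = {1..n::nat}" by auto

lemma sum_list_upt': "sum_list (map f [a..<b]) = sum f {a..<b}"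
  by (simp add: sum.distinct_set_conv_list[symmetric])

lemma ham_cj: assumes sg: "simple_graph n E"
  shows "hamiltonian n E = cj n E (\<lambda>a. - of_real (\<Sum>i\<in>{1..n}. (-1)^qbit n i a))"
proof -
  have m: "map (stab n E) [1..<n+1] = map (\<lambda>i. cj n E (\<lambda>a. (-1)^qbit n i a)) [1..<n+1]"
    by (rule map_cong) (auto simp: stab_cj[OF sg])
  show ?thesis unfolding hamiltonian_def m
    by (simp only: foldr_cj cj_uminus sum_list_upt' upt_set) simp
qed

definition wgt :: "real \<Rightarrow> nat \<Rightarrow> real" where
  "wgt \<beta> x = exp (\<beta> * (-1)^x) / (exp \<beta> + exp (-\<beta>))"

definition rw :: "nat \<Rightarrow> real \<Rightarrow> nat \<Rightarrow> real" where
  "rw n \<beta> a = (\<Prod>i\<in>{1..n}. wgt \<beta> (qbit n i a))"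

lemma thermal_cj: assumes sg: "simple_graph n E"
  shows "thermal_state n E \<beta> = cj n E (\<lambda>a. of_real (rw n \<beta> a))"
proof -
  define ew where "ew a = (\<Prod>i\<in>{1..n}. exp (\<beta> * (-1)^qbit n i a))" for a
  define Zc where "Zc = exp \<beta> + exp (-\<beta>)"
  have Zc: "Zc > 0" by (simp add: Zc_def add_pos_pos)
  have "complex_of_real (-\<beta>) \<cdot>\<^sub>m hamiltonian n E = cj n E (\<lambda>a. of_real (\<beta> * (\<Sum>i\<in>{1..n}. (-1)^qbit n i a)))"
    by (simp add: ham_cj[OF sg] cj_smult)
  also have "(\<lambda>a. \<beta> * (\<Sum>i\<in>{1..n}. (-1)^qbit n i a)) = (\<lambda>a. (\<Sum>i\<in>{1..n}. \<beta> * (-1)^qbit n i a))"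
    by (simp add: sum_distrib_left)
  finally have "mat_exp (complex_of_real (-\<beta>) \<cdot>\<^sub>m hamiltonian n E) = cj n E (\<lambda>a. exp (of_real (\<Sum>i\<in>{1..n}. \<beta> * (-1)^qbit n i a)))"
    by (simp only: cj_exp)
  also have "\<dots> = cj n E (\<lambda>a. of_real (ew a))"
    by (simp only: exp_of_real ew_def) (simp add: exp_sum)
  finally have M: "mat_exp (complex_of_real (-\<beta>) \<cdot>\<^sub>m hamiltonian n E) = cj n E (\<lambda>a. of_real (ew a))" .
  have "(\<Sum>a<2^n. ew a) = (\<Prod>i\<in>{1..n}. (exp (\<beta> * (-1)^0) + exp (\<beta> * (-1)^1)))"
    unfolding ew_def by (rule PS)
  also have "\<dots> = Zc ^ n" by (simp add: Zc_def)
  finally have tr: "mtrace (cj n E (\<lambda>a. of_real (ew a))) = of_real (Zc ^ n)"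
    by (simp add: cj_trace flip: of_real_sum)
  have "(\<lambda>a. 1 / complex_of_real (Zc ^ n) * of_real (ew a)) = (\<lambda>a. of_real (rw n \<beta> a))"
  proof
    fix a
    have "ew a / Zc ^ n = rw n \<beta> a"
      unfolding ew_def rw_def wgt_def Zc_def[symmetric] by (simp add: prod_dividef)
    thus "1 / complex_of_real (Zc ^ n) * of_real (ew a) = of_real (rw n \<beta> a)"
      by (metis divide_inverse mult.commute mult_1 of_real_divide)
  qed
  thus ?thesis unfolding thermal_state_def Let_def M tr cj_smult by simp
qed

lemma S_op_cj: assumes sg: "simple_graph n E"
  shows "S_op n E l = cj n E (\<lambda>a. of_real (\<Prod>i\<in>{1..n}. ((-1)^qbit n i a)^(l i)))"
proof -
  have m: "map (\<lambda>i. stab n E i ^\<^sub>m l i) [1..<n+1] = map (\<lambda>i. cj n E (\<lambda>a. ((-1)^qbit n i a)^(l i))) [1..<n+1]"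
    by (rule map_cong) (auto simp: stab_cj[OF sg] cj_pow)
  show ?thesis unfolding S_op_def m
    by (simp only: mprod_cj prod_list_upt upt_set) simp
qed

lemma cnj_pl: "cnj (prod_list (map (\<lambda>x. (-1::complex)^(h x)) xs)) = prod_list (map (\<lambda>x. (-1::complex)^(h x)) xs)"
  by (induct xs) auto

lemma cnj_cph: "cnj (cph n E a) = cph n E a"
  unfolding cph_def case_prod_unfold by (rule cnj_pl)

lemma qbit_zero: "qbit n i 0 = 0" by (simp add: qbit_def)

lemma Hd_sym: "a < 2^n \<Longrightarrow> b < 2^n \<Longrightarrow> Hd n $$ (a,b) = Hd n $$ (b,a)"
  by (simp add: Hd_index mult.commute)

lemma Hd_col0: "a < 2^n \<Longrightarrow> Hd n $$ (a,0) = complex_of_real (1 / sqrt (2^n))"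
  by (simp add: Hd_index qbit_zero)

lemma gs_dim[simp]: "dim_vec (graph_state n E) = 2^n"
  by (simp add: graph_state_def mprod_dg CZ_prod plus_state_def)

lemma gs_entry: "a < 2^n \<Longrightarrow> graph_state n E $ a = cph n E a * Hd n $$ (a, 0)"
proof -
  assume a: "a < 2^n"
  have "graph_state n E $ a = Matrix.row (Cm n E) a \<bullet> plus_state n"
    unfolding graph_state_def CZ_prod using a by simp
  also have "\<dots> = (\<Sum>k\<in>{0..<2^n}. Cm n E $$ (a,k) * complex_of_real (1 / sqrt (2^n)))"
    using a by (simp add: scalar_prod_def plus_state_def)
  also have "\<dots> = cph n E a * complex_of_real (1 / sqrt (2^n))"
    using a by (simp add: Cm_def if_distrib[of "\<lambda>x. x * _"] if_distrib[of "\<lambda>x. x / _"] cong: if_cong)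
  finally show ?thesis using a by (simp add: Hd_col0)
qed

lemma cnj_gs: "a < 2^n \<Longrightarrow> cnj (graph_state n E $ a) = graph_state n E $ a"
  by (simp add: gs_entry Hd_col0 cnj_cph)

lemma sumW: assumes c: "c < 2^n" shows "(\<Sum>a<2^n. graph_state n E $ a * W n E $$ (a,c)) = (if c = 0 then 1 else 0)"
proof -
  have "(\<Sum>a<2^n. graph_state n E $ a * W n E $$ (a,c)) = (\<Sum>a<2^n. Hd n $$ (c,a) * Hd n $$ (a,0))"
  proof (rule sum.cong)
    fix a assume "a \<in> {..<(2::nat)^n}"
    hence a: "a < 2^n" by auto
    have "W n E $$ (a,c) = cph n E a * Hd n $$ (a,c)"
      unfolding W_def Cm_def by (rule dg_mult_entry) (use a c in auto)
    thus "graph_state n E $ a * W n E $$ (a,c) = Hd n $$ (c,a) * Hd n $$ (a,0)"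
      using a c cph_sq[of n E a] Hd_sym[of a n c] by (simp add: gs_entry mult.assoc[symmetric])
  qed simp
  also have "\<dots> = (Hd n * Hd n) $$ (c,0)"
    by (rule mult_entry[symmetric]) (use c in auto)
  finally show ?thesis using c by (simp add: Hd_Hd)
qed

lemma sumWi: assumes c: "c < 2^n" shows "(\<Sum>b<2^n. Wi n E $$ (c,b) * graph_state n E $ b) = (if c = 0 then 1 else 0)"
proof -
  have "(\<Sum>b<2^n. Wi n E $$ (c,b) * graph_state n E $ b) = (\<Sum>b<2^n. Hd n $$ (c,b) * Hd n $$ (b,0))"
  proof (rule sum.cong)
    fix b assume "b \<in> {..<(2::nat)^n}"
    hence b: "b < 2^n" by auto
    have "Wi n E $$ (c,b) = Hd n $$ (c,b) * cph n E b"
      unfolding Wi_def Cm_def by (rule mult_dg_entry) (use b c in auto)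
    thus "Wi n E $$ (c,b) * graph_state n E $ b = Hd n $$ (c,b) * Hd n $$ (b,0)"
      using b c cph_sq[of n E b] by (simp add: gs_entry algebra_simps)
  qed simp
  also have "\<dots> = (Hd n * Hd n) $$ (c,0)"
    by (rule mult_entry[symmetric]) (use c in auto)
  finally show ?thesis using c by (simp add: Hd_Hd)
qed

lemma expval_cj: "expval (graph_state n E) (cj n E g) = g 0"
proof -
  let ?p = "graph_state n E"
  have "expval ?p (cj n E g) = (\<Sum>a<2^n. \<Sum>b<2^n. \<Sum>c<2^n. g c * ((?p $ a * W n E $$ (a,c)) * (Wi n E $$ (c,b) * ?p $ b)))"
    unfolding expval_def gs_dim
    by (intro sum.cong refl) (simp add: cj_entry cnj_gs sum_distrib_left sum_distrib_right algebra_simps)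
  also have "\<dots> = (\<Sum>c<2^n. \<Sum>a<2^n. \<Sum>b<2^n. g c * ((?p $ a * W n E $$ (a,c)) * (Wi n E $$ (c,b) * ?p $ b)))"
    by (subst sum.swap) (subst (2) sum.swap, rule refl)
  also have "\<dots> = (\<Sum>c<2^n. g c * ((\<Sum>a<2^n. ?p $ a * W n E $$ (a,c)) * (\<Sum>b<2^n. Wi n E $$ (c,b) * ?p $ b)))"
    by (simp only: sum_product) (simp only: sum_distrib_left)
  also have "\<dots> = (\<Sum>c<2^n. if c = 0 then g c else 0)"
    by (rule sum.cong) (auto simp: sumW sumWi)
  also have "\<dots> = g 0" by simp
  finally show ?thesis .
qed

lemma bias_bound:
  fixes x :: real assumes x0: "0 \<le> x" and x1: "x \<le> 1"
  shows "0 \<le> 1/(1+x)^(2*k) - ((1-x)/(1+x))^k" and "1/(1+x)^(2*k) - ((1-x)/(1+x))^k \<le> k*x^2/(1+x)^(2*k)"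
proof -
  have p: "(1+x)^(2*k) > 0" using x0 by simp
  have q: "(1+x)^(2*k) = (1+x)^k * (1+x)^k" by (simp add: power_add[symmetric] mult_2)
  have q2: "(1+x)^k > 0" using x0 by simp
  have "((1-x)/(1+x))^k = (1-x)^k * (1+x)^k / (1+x)^(2*k)"
    unfolding q using q2 by (simp add: power_divide)
  also have "(1-x)^k * (1+x)^k = (1 - x^2)^k"
    by (simp add: power_mult_distrib[symmetric] power2_eq_square algebra_simps)
  finally have e: "1/(1+x)^(2*k) - ((1-x)/(1+x))^k = (1 - (1-x^2)^k) / (1+x)^(2*k)"
    by (simp add: diff_divide_distrib)
  have a: "(1-x^2)^k \<le> 1" using x0 x1 by (intro power_le_one) (auto simp: power_le_one_iff)
  have b: "1 + real k * (-(x^2)) \<le> (1 + (-(x^2)))^k"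
    by (rule Bernoulli_inequality) (use x0 x1 in \<open>auto simp: power_le_one_iff\<close>)
  show "0 \<le> 1/(1+x)^(2*k) - ((1-x)/(1+x))^k" unfolding e using a p by simp
  show "1/(1+x)^(2*k) - ((1-x)/(1+x))^k \<le> k*x^2/(1+x)^(2*k)" unfolding e
    using b p by (intro divide_right_mono) auto
qed

lemma binom2: fixes x :: real assumes "0 \<le> x" shows "(1+x)^n \<ge> 1 + real n*x + (real n*(real n-1)/2)*x^2"
proof (induction n)
  case 0 then show ?case by simp
next
  case (Suc n)
  have "(1+x)^Suc n = (1+x)^n * (1+x)" by simp
  also have "\<dots> \<ge> (1 + real n*x + (real n*(real n-1)/2)*x^2) * (1+x)"
    using Suc.IH assms by (intro mult_right_mono) auto
  finally have "(1+x)^Suc n \<ge> (1 + real n*x + (real n*(real n-1)/2)*x^2) * (1+x)" .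
  moreover have "(1 + real n*x + (real n*(real n-1)/2)*x^2) * (1+x) \<ge> 1 + real (Suc n) * x + (real (Suc n) * (real (Suc n) - 1)/2)*x^2"
  proof -
    define c where "c = real n*(real n-1)/2"
    have c0: "c \<ge> 0" unfolding c_def by (cases n) auto
    have c1: "real (Suc n) * (real (Suc n) - 1)/2 = c + n" unfolding c_def by (simp add: field_simps)
    have "(1 + real n*x + c*x^2) * (1+x) - (1 + real (Suc n) * x + (c + n)*x^2) = c * x^3"
      by (simp add: algebra_simps power2_eq_square power3_eq_cube)
    moreover have "c * x^3 \<ge> 0" using c0 assms by simp
    ultimately show ?thesis unfolding c1 c_def[symmetric] by linarith
  qed
  ultimately show ?case by linarith
qed

lemma second_bound: fixes x :: real assumes x0: "0 < x" and n: "n \<ge> 2"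
  shows "real n * x^2 / (2*(1+x)^n) \<le> 2 / real n"
proof -
  have "(1+x)^n \<ge> (real n*(real n-1)/2)*x^2" using binom2[of x n] x0
    by (smt (verit) mult_nonneg_nonneg of_nat_0_le_iff)
  hence "2*(1+x)^n \<ge> (real n*(real n-1))*x^2" by simp
  have pos: "(real n*(real n-1))*x^2 > 0" using x0 n by simp
  have "real n * x^2 / (2*(1+x)^n) \<le> real n * x^2 / ((real n*(real n-1))*x^2)"
    using \<open>2*(1+x)^n \<ge> _\<close> pos x0 by (intro divide_left_mono) auto
  also have "\<dots> = 1 / (real n - 1)" using x0 n by (simp add: field_simps)
  also have "\<dots> \<le> 2 / real n" using n by (simp add: field_simps)
  finally show ?thesis .
qed

lemma F_val: assumes "simple_graph n E"
  shows "expval (graph_state n E) (thermal_state n E \<beta>) = of_real (wgt \<beta> 0 ^ n)"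
  by (simp add: thermal_cj[OF assms] expval_cj rw_def qbit_zero)

lemma op_gen: "outcome_prob (cj n E (\<lambda>x. of_real (r x))) (cj n E (\<lambda>x. of_real (s x))) a
   = (\<Sum>x<2^n. r x * (1 + a * s x)) / 2"
proof -
  have "1\<^sub>m (2^n) + complex_of_real a \<cdot>\<^sub>m cj n E (\<lambda>x. of_real (s x)) = cj n E (\<lambda>x. 1 + of_real (a * s x))"
    by (simp add: cj_one[of n E, symmetric] cj_smult cj_add)
  hence m: "cj n E (\<lambda>x. of_real (r x)) * ((1/2::complex) \<cdot>\<^sub>m (1\<^sub>m (2^n) + complex_of_real a \<cdot>\<^sub>m cj n E (\<lambda>x. of_real (s x))))
     = cj n E (\<lambda>x. of_real (r x * (1 + a * s x) / 2))"
    by (simp add: cj_smult cj_mult algebra_simps add_divide_distrib)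
  show ?thesis unfolding outcome_prob_def cj_dim m cj_trace
    by (simp only: of_real_sum[symmetric] Re_complex_of_real) (simp add: sum_divide_distrib)
qed

lemma op_val: assumes sg: "simple_graph n E" and kn: "k \<le> n"
  shows "outcome_prob (thermal_state n E \<beta>) (S_op n E (ones_zeros k)) 1 = (1 + (wgt \<beta> 0 - wgt \<beta> 1)^k) / 2"
proof -
  define sgn where "sgn x = (\<Prod>i\<in>{1..n}. ((-1::real)^qbit n i x)^(ones_zeros k i))" for x
  have S: "S_op n E (ones_zeros k) = cj n E (\<lambda>x. of_real (sgn x))"
    unfolding S_op_cj[OF sg] sgn_def by simp
  have w1: "wgt \<beta> 0 + wgt \<beta> 1 = 1"
  proof -
    have "exp \<beta> + exp (-\<beta>) > 0" by (simp add: add_pos_pos)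
    thus ?thesis unfolding wgt_def by (simp add: add_divide_distrib[symmetric])
  qed
  have "(\<Sum>x<2^n. rw n \<beta> x * (1 + 1 * sgn x)) = (\<Sum>x<2^n. rw n \<beta> x) + (\<Sum>x<2^n. rw n \<beta> x * sgn x)"
    by (simp add: sum.distrib algebra_simps)
  also have "(\<Sum>x<2^n. rw n \<beta> x) = 1"
    unfolding rw_def using PS[of "\<lambda>i y. wgt \<beta> y" n] w1 by simp
  also have "(\<Sum>x<2^n. rw n \<beta> x * sgn x) = (\<Sum>x<2^n. \<Prod>i\<in>{1..n}. (\<lambda>i y. wgt \<beta> y * ((-1)^y)^(ones_zeros k i)) i (qbit n i x))"
    unfolding rw_def sgn_def by (simp add: prod.distrib)
  also have "\<dots> = (\<Prod>i\<in>{1..n}. (wgt \<beta> 0 + wgt \<beta> 1 * (-1)^(ones_zeros k i)))"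
    by (subst PS) simp
  also have "\<dots> = (\<Prod>i\<in>{1..n}. if i \<le> k then wgt \<beta> 0 - wgt \<beta> 1 else 1)"
    using w1 by (intro prod.cong) (auto simp: ones_zeros_def)
  also have "\<dots> = (wgt \<beta> 0 - wgt \<beta> 1)^k"
  proof -
    have "{1..n} \<inter> {i. i \<le> k} = {1..k}" using kn by auto
    thus ?thesis by (simp add: prod.If_cases)
  qed
  finally show ?thesis unfolding thermal_cj[OF sg] S op_gen by simp
qed

lemma out_meas:
  assumes P: "prob_space M" and ind: "prob_space.indep_vars M (\<lambda>_. borel) out UNIV"
  shows "out i \<in> borel_measurable M"
  using ind unfolding prob_space.indep_vars_def[OF P] by blast

lemma exp_out:
  assumes P: "prob_space M" and ind: "prob_space.indep_vars M (\<lambda>_. borel) out UNIV"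
    and rng: "\<And>i \<omega>. \<omega> \<in> space M \<Longrightarrow> out i \<omega> \<in> {1, -1}"
  shows "integral\<^sup>L M (out i) = 2 * measure M {\<omega> \<in> space M. out i \<omega> = 1} - 1"
proof -
  interpret prob_space M by fact
  have m[measurable]: "out i \<in> borel_measurable M" by (rule out_meas[OF P ind])
  define A where "A = {\<omega> \<in> space M. out i \<omega> = 1}"
  have A: "A \<in> sets M" unfolding A_def by measurable
  have "integral\<^sup>L M (out i) = integral\<^sup>L M (\<lambda>\<omega>. 2 * indicator A \<omega> - 1)"
  proof (rule Bochner_Integration.integral_cong[OF refl])
    fix x assume x: "x \<in> space M"
    show "out i x = 2 * indicator A x - 1" using rng[OF x, of i] x by (auto simp: A_def indicator_def)
  qed
  also have "\<dots> = 2 * measure M A - 1"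
  proof -
    have i1: "integrable M (\<lambda>\<omega>. 2 * indicator A \<omega> :: real)"
      using A by (intro integrable_mult_right integrable_real_indicator) (auto simp: emeasure_eq_measure)
    have "integral\<^sup>L M (\<lambda>\<omega>. 2 * indicator A \<omega> - 1) = integral\<^sup>L M (\<lambda>\<omega>. 2 * indicator A \<omega>) - integral\<^sup>L M (\<lambda>_. 1::real)"
      by (rule Bochner_Integration.integral_diff) (use i1 A in \<open>simp_all add: emeasure_eq_measure\<close>)
    thus ?thesis using A by (simp add: prob_space)
  qed
  finally show ?thesis unfolding A_def .
qed

lemma hoeff:
  assumes P: "prob_space M" and ind: "prob_space.indep_vars M (\<lambda>_. borel) out UNIV"
    and rng: "\<And>i \<omega>. \<omega> \<in> space M \<Longrightarrow> out i \<omega> \<in> {1, -1}"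
    and ex: "\<And>i. integral\<^sup>L M (out i) = \<mu>"
    and N: "N > 0" and e: "e > 0"
  shows "measure M {\<omega> \<in> space M. e \<le> \<bar>F_est out N \<omega> - \<mu>\<bar>} \<le> 2 * exp (-(e^2 * N)/2)"
proof -
  interpret prob_space M by fact
  interpret H: Hoeffding_ineq M "{..<N}" out "\<lambda>_. -1" "\<lambda>_. 1" "\<Sum>i<N. expectation (out i)"
  proof unfold_locales
    show "indep_vars (\<lambda>_. borel) out {..<N}" by (rule indep_vars_subset[OF ind]) auto
    fix i show "AE x in M. out i x \<in> {-1..1}"
    proof (rule AE_I2)
      fix x assume x: "x \<in> space M"
      from rng[OF x, of i] show "out i x \<in> {-1..1}" by auto
    qed
  qed auto
  have "prob {x\<in>space M. \<bar>(\<Sum>i\<in>{..<N}. out i x) - (\<Sum>i<N. expectation (out i))\<bar> \<ge> e * N} \<le>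
        2 * exp (-2 * (e * N)\<^sup>2 / (\<Sum>i\<in>{..<N}. ((1::real) - (-1))\<^sup>2))"
    by (rule H.Hoeffding_ineq_abs_ge) (use e N in auto)
  also have "-2 * (e * N)\<^sup>2 / (\<Sum>i\<in>{..<N}. ((1::real) - (-1))\<^sup>2) = -(e^2 * N)/2"
    using N by (simp add: power2_eq_square field_simps)
  also have "{x\<in>space M. \<bar>(\<Sum>i\<in>{..<N}. out i x) - (\<Sum>i<N. expectation (out i))\<bar> \<ge> e * N}
     = {\<omega> \<in> space M. e \<le> \<bar>F_est out N \<omega> - \<mu>\<bar>}"
  proof -
    have "\<bar>(\<Sum>i<N. out i x) - N * \<mu>\<bar> = N * \<bar>F_est out N x - \<mu>\<bar>" for x
    proof -
      have "(\<Sum>i<N. out i x) - N * \<mu> = N * (F_est out N x - \<mu>)"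
        using N unfolding F_est_def by (simp add: field_simps)
      thus ?thesis by (simp add: abs_mult)
    qed
    thus ?thesis using N by (auto simp: ex mult.commute)
  qed
  finally show ?thesis .
qed

lemma slln:
  assumes P: "prob_space M" and ind: "prob_space.indep_vars M (\<lambda>_. borel) out UNIV"
    and rng: "\<And>i \<omega>. \<omega> \<in> space M \<Longrightarrow> out i \<omega> \<in> {1, -1}"
    and ex: "\<And>i. integral\<^sup>L M (out i) = \<mu>"
  shows "AE \<omega> in M. (\<lambda>N. F_est out N \<omega>) \<longlonglongrightarrow> \<mu>"
proof -
  interpret prob_space M by fact
  have [measurable]: "out i \<in> borel_measurable M" for i by (rule out_meas[OF P ind])
  define A where "A m N = {\<omega> \<in> space M. 1 / real (Suc m) \<le> \<bar>F_est out N \<omega> - \<mu>\<bar>}" for m N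
  have Am[measurable]: "A m N \<in> sets M" for m N
    unfolding A_def F_est_def by measurable
  have ev: "AE x in M. eventually (\<lambda>N. x \<in> space M - A m N) sequentially" for m
  proof (rule borel_cantelli_AE1)
    show "A m N \<in> sets M" for N by (rule Am)
    show "emeasure M (A m N) < \<infinity>" for N by (simp add: emeasure_eq_measure)
    define e where "e = 1 / real (Suc m)"
    have e: "e > 0" by (simp add: e_def)
    define r where "r = exp (-(e^2)/2)"
    have r: "r < 1" "r \<ge> 0" using e by (auto simp: r_def)
    have bnd: "measure M (A m N) \<le> 2 * r^N" for N
    proof (cases "N = 0")
      case True
      have "measure M (A m N) \<le> 1" by (rule prob_le_1)
      moreover have "2 * r^N = 2" using True by simp
      ultimately show ?thesis by linarith
    next
      case False
      have "measure M (A m N) \<le> 2 * exp (-(e^2 * N)/2)"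
        unfolding A_def e_def[symmetric] by (rule hoeff[OF P ind rng ex]) (use False e in auto)
      also have "exp (-(e^2 * N)/2) = r^N"
        unfolding r_def by (simp add: exp_of_nat_mult[symmetric] algebra_simps)
      finally show ?thesis .
    qed
    show "summable (\<lambda>N. measure M (A m N))"
    proof (rule summable_comparison_test)
      show "\<exists>N0. \<forall>N\<ge>N0. norm (measure M (A m N)) \<le> 2 * r^N" using bnd by auto
      show "summable (\<lambda>N. 2 * r^N)" using r by (intro summable_mult summable_geometric) auto
    qed
  qed
  hence "AE x in M. \<forall>m. eventually (\<lambda>N. x \<in> space M - A m N) sequentially"
    by (simp add: AE_all_countable)
  thus ?thesis
  proof (rule eventually_mono)
    fix x assume H: "\<forall>m. eventually (\<lambda>N. x \<in> space M - A m N) sequentially"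
    show "(\<lambda>N. F_est out N x) \<longlonglongrightarrow> \<mu>"
    proof (rule LIMSEQ_I)
      fix r :: real assume "0 < r"
      then obtain m where m: "1 / real (Suc m) < r" by (rule nat_approx_posE)
      from H[rule_format, of m] obtain N0 where N0: "\<And>N. N \<ge> N0 \<Longrightarrow> x \<in> space M - A m N"
        by (auto simp: eventually_sequentially)
      show "\<exists>no. \<forall>N\<ge>no. norm (F_est out N x - \<mu>) < r"
      proof (intro exI allI impI)
        fix N assume "N \<ge> N0"
        from N0[OF this] have "\<bar>F_est out N x - \<mu>\<bar> < 1 / real (Suc m)" by (auto simp: A_def)
        thus "norm (F_est out N x - \<mu>) < r" using m by simp
      qed
    qed
  qed
qed

lemma wgt_x: "wgt \<beta> 0 = 1/(1+exp(-2*\<beta>))" "wgt \<beta> 0 - wgt \<beta> 1 = (1 - exp(-2*\<beta>))/(1+exp(-2*\<beta>))"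
proof -
  have d: "exp \<beta> + exp(-\<beta>) = exp \<beta> * (1 + exp(-2*\<beta>))"
    by (simp add: distrib_left exp_add[symmetric])
  have d1: "exp (-\<beta>) = exp \<beta> * exp(-2*\<beta>)" by (simp add: exp_add[symmetric])
  have p: "1 + exp(-2*\<beta>) > 0" by (simp add: add_pos_pos)
  show "wgt \<beta> 0 = 1/(1+exp(-2*\<beta>))" unfolding wgt_def d using p by simp
  show "wgt \<beta> 0 - wgt \<beta> 1 = (1 - exp(-2*\<beta>))/(1+exp(-2*\<beta>))"
    unfolding wgt_def d using p by (simp add: d1 diff_divide_distrib[symmetric] right_diff_distrib)
qed

theorem theorem1:
  fixes n k :: nat and E :: "nat set set" and kB T \<epsilon> \<delta> :: real
    and M :: "'a measure" and out :: "nat \<Rightarrow> 'a \<Rightarrow> real"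
  assumes "even n" and "n \<ge> 4" and "k = n div 2"
    and "simple_graph n E"
    and "kB > 0" and "T > 0"
    and "0 < \<epsilon>" and "\<epsilon> < 1" and "0 < \<delta>" and "\<delta> < 1"
    and "prob_space M"
    and "prob_space.indep_vars M (\<lambda>_. borel) out UNIV"
    and "\<And>i \<omega>. \<omega> \<in> space M \<Longrightarrow> out i \<omega> \<in> {1, -1}"
    and "\<And>i a. a \<in> {1, -1} \<Longrightarrow>
           measure M {\<omega> \<in> space M. out i \<omega> = a}
             = outcome_prob (thermal_state n E (1 / (kB * T))) (S_op n E (ones_zeros k)) a"
  shows "let \<beta> = 1 / (kB * T);
             \<rho> = thermal_state n E \<beta>;
             F = expval (graph_state n E) \<rho>;
             N = nat \<lceil>(2 / \<epsilon>\<^sup>2) * ln (2 / \<delta>)\<rceil>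
         in measure M {\<omega> \<in> space M.
              cmod (F - complex_of_real (F_est out N \<omega>))
                \<le> real n * exp (-4 * \<beta>) / (2 * (1 + exp (-2 * \<beta>)) ^ n) + \<epsilon>} \<ge> 1 - \<delta>
          \<and> real n * exp (-4 * \<beta>) / (2 * (1 + exp (-2 * \<beta>)) ^ n) + \<epsilon> \<le> 2 / real n + \<epsilon>
          \<and> (AE \<omega> in M. convergent (\<lambda>N. F_est out N \<omega>) \<and> lim (\<lambda>N. F_est out N \<omega>) \<le> Re F)"
proof -
  note ev = assms(1) and n4 = assms(2) and kdef = assms(3) and sg = assms(4)
  note P = assms(11) and ind = assms(12) and rng = assms(13) and pr = assms(14)
  interpret prob_space M by (rule P)
  have [measurable]: "out i \<in> borel_measurable M" for i by (rule out_meas[OF P ind])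
  define \<beta> where "\<beta> = 1 / (kB * T)"
  have \<beta>: "\<beta> > 0" unfolding \<beta>_def using assms(5,6) by simp
  define x where "x = exp (-2*\<beta>)"
  have x0: "x > 0" and x1: "x < 1" using \<beta> by (auto simp: x_def)
  have n2k: "n = 2*k" using ev kdef by auto
  have kn: "k \<le> n" using kdef by auto
  define \<mu> where "\<mu> = ((1-x)/(1+x))^k"
  define Fr where "Fr = 1/(1+x)^(2*k)"
  define bias where "bias = real n * exp (-4 * \<beta>) / (2 * (1 + exp (-2 * \<beta>)) ^ n)"
  have bias_eq: "bias = k*x^2/(1+x)^(2*k)"
  proof -
    have "exp (-4*\<beta>) = x^2" unfolding x_def by (simp add: exp_add[symmetric] power2_eq_square)
    thus ?thesis unfolding bias_def n2k by (simp add: x_def)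
  qed
  have F: "expval (graph_state n E) (thermal_state n E \<beta>) = of_real Fr"
  proof -
    have "wgt \<beta> 0 ^ n = Fr" unfolding wgt_x Fr_def x_def[symmetric] n2k by (simp add: power_divide)
    thus ?thesis using F_val[OF sg, of \<beta>] by simp
  qed
  have ex: "integral\<^sup>L M (out i) = \<mu>" for i
  proof -
    have "integral\<^sup>L M (out i) = 2 * measure M {\<omega> \<in> space M. out i \<omega> = 1} - 1"
      by (rule exp_out[OF P ind rng])
    also have "measure M {\<omega> \<in> space M. out i \<omega> = 1} = outcome_prob (thermal_state n E \<beta>) (S_op n E (ones_zeros k)) 1"
      using pr[of 1 i] unfolding \<beta>_def by simp
    also have "\<dots> = (1 + (wgt \<beta> 0 - wgt \<beta> 1)^k) / 2" by (rule op_val[OF sg kn])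
    finally have "integral\<^sup>L M (out i) = 2 * ((1 + (wgt \<beta> 0 - wgt \<beta> 1)^k) / 2) - 1" .
    thus ?thesis unfolding wgt_x(2) \<mu>_def x_def by (simp add: add_divide_distrib)
  qed
  have bb1: "0 \<le> Fr - \<mu>" and bb2: "Fr - \<mu> \<le> bias"
    using bias_bound[of x k] x0 x1 unfolding Fr_def \<mu>_def bias_eq by auto
  define N where "N = nat \<lceil>(2 / \<epsilon>\<^sup>2) * ln (2 / \<delta>)\<rceil>"
  have lnpos: "ln (2 / \<delta>) > 0" using assms(9,10) by simp
  have Nge: "real N \<ge> (2 / \<epsilon>\<^sup>2) * ln (2 / \<delta>)" unfolding N_def by linarith
  have Npos: "N > 0"
  proof -
    have "(2 / \<epsilon>\<^sup>2) * ln (2 / \<delta>) > 0" using lnpos assms(7) by simp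
    thus ?thesis using Nge by linarith
  qed
  have part1: "measure M {\<omega> \<in> space M. cmod (of_real Fr - complex_of_real (F_est out N \<omega>)) \<le> bias + \<epsilon>} \<ge> 1 - \<delta>"
  proof -
    define B where "B = {\<omega> \<in> space M. \<epsilon> \<le> \<bar>F_est out N \<omega> - \<mu>\<bar>}"
    have Bm: "B \<in> sets M" unfolding B_def F_est_def by measurable
    have "measure M B \<le> 2 * exp (-(\<epsilon>^2 * N)/2)"
      unfolding B_def by (rule hoeff[OF P ind rng ex Npos assms(7)])
    also have "\<dots> \<le> \<delta>"
    proof -
      have "\<epsilon>^2 * N / 2 \<ge> ln (2 / \<delta>)"
        using Nge assms(7) by (simp add: field_simps)
      hence "exp (-(\<epsilon>^2 * N)/2) \<le> exp (- ln (2 / \<delta>))" by simp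
      also have "\<dots> = \<delta> / 2" using assms(9) by (simp add: exp_minus)
      finally show ?thesis by simp
    qed
    finally have mB: "measure M B \<le> \<delta>" .
    have Tm: "{\<omega> \<in> space M. cmod (of_real Fr - complex_of_real (F_est out N \<omega>)) \<le> bias + \<epsilon>} \<in> sets M"
      unfolding F_est_def by measurable
    have sub: "space M - B \<subseteq> {\<omega> \<in> space M. cmod (of_real Fr - complex_of_real (F_est out N \<omega>)) \<le> bias + \<epsilon>}"
    proof
      fix \<omega> assume "\<omega> \<in> space M - B"
      hence w: "\<omega> \<in> space M" "\<bar>F_est out N \<omega> - \<mu>\<bar> < \<epsilon>" by (auto simp: B_def)
      have "cmod (of_real Fr - complex_of_real (F_est out N \<omega>)) = \<bar>Fr - F_est out N \<omega>\<bar>"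
        by (metis norm_of_real of_real_diff)
      also have "\<dots> \<le> bias + \<epsilon>" using w bb1 bb2 by linarith
      finally show "\<omega> \<in> {\<omega> \<in> space M. cmod (of_real Fr - complex_of_real (F_est out N \<omega>)) \<le> bias + \<epsilon>}"
        using w by simp
    qed
    have "1 - \<delta> \<le> measure M (space M - B)" using mB prob_compl[OF Bm] by simp
    also have "\<dots> \<le> measure M {\<omega> \<in> space M. cmod (of_real Fr - complex_of_real (F_est out N \<omega>)) \<le> bias + \<epsilon>}"
      by (rule finite_measure_mono[OF sub Tm])
    finally show ?thesis .
  qed
  have part2: "bias + \<epsilon> \<le> 2 / real n + \<epsilon>"
  proof -
    have "bias = real n * x^2 / (2*(1+x)^n)"
      unfolding bias_eq n2k by simp
    thus ?thesis using second_bound[of x n] x0 n4 by simp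
  qed
  have part3: "AE \<omega> in M. convergent (\<lambda>N. F_est out N \<omega>) \<and> lim (\<lambda>N. F_est out N \<omega>) \<le> Re (of_real Fr)"
    using slln[OF P ind rng ex]
  proof (rule eventually_mono)
    fix \<omega> assume "(\<lambda>N. F_est out N \<omega>) \<longlonglongrightarrow> \<mu>"
    thus "convergent (\<lambda>N. F_est out N \<omega>) \<and> lim (\<lambda>N. F_est out N \<omega>) \<le> Re (of_real Fr)"
      using bb1 by (auto simp: convergent_def limI)
  qed
  show ?thesis
    unfolding Let_def \<beta>_def[symmetric] F N_def[symmetric] bias_def[symmetric]
    using part1 part2 part3 by blast
qed

end
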